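(* Let $M\in\mathrm{Mat}(d,\mathbb{Z})$ and $n\in\mathbb{N}$, and consider the map $x\mapsto Mx \bmod n$ on $\tilde L_n=(\mathbb{Z}/n\mathbb{Z})^d$. Then for every periodic point $y$ of this map, the pretail graph of $y$ is isomorphic (as a directed graph) to the pretail graph of the fixed point $0$. Reversing all edge directions of the pretail graph of $0$ yields a rooted tree with root $0$, and this tree is trivial (consists of the single vertex $0$) if and only if $M$ is invertible on $\tilde L_n$.
   Context: A point $y\in\tilde L_n$ is periodic if $M^k y\equiv y \pmod n$ for some $k\ge1$. Given a periodic point $y$, a finite set of iterates $\{x, Mx, \dots, M^j x = y\}$ (mod $n$) is called a pretail of $y$ if $y$ is the only periodic point in it; $j$ is its length. The pretail graph of $y$ is the directed graph obtained by combining all pretails of $y$: its vertices are the points of all pretails of $y$, with a directed edge $z\to Mz$ for every vertex $z\neq y$ (so no edge leaves $y$). *)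

theory Defs
  imports "HOL-Analysis.Analysis"
begin

text \<open>The lattice (Z/nZ)^d, represented by integer vectors with entries in {0..<n}.\<close>
definition Ltil :: "int \<Rightarrow> (int ^ 'd) set" where
  "Ltil n = {x. \<forall>i. 0 \<le> x $ i \<and> x $ i < n}"

definition Tmap :: "int ^ 'd ^ 'd \<Rightarrow> int \<Rightarrow> int ^ 'd \<Rightarrow> int ^ 'd" where
  "Tmap M n x = (\<chi> i. (M *v x) $ i mod n)"

definition periodic_pt :: "int ^ 'd ^ 'd \<Rightarrow> int \<Rightarrow> int ^ 'd \<Rightarrow> bool" where
  "periodic_pt M n y \<longleftrightarrow> y \<in> Ltil n \<and> (\<exists>k\<ge>1. (Tmap M n ^^ k) y = y)"

definition is_pretail :: "int ^ 'd ^ 'd \<Rightarrow> int \<Rightarrow> int ^ 'd \<Rightarrow> (int ^ 'd) set \<Rightarrow> bool" where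
  "is_pretail M n y S \<longleftrightarrow>
     (\<exists>x j. x \<in> Ltil n \<and> (Tmap M n ^^ j) x = y \<and>
            S = {(Tmap M n ^^ i) x | i. i \<le> j} \<and>
            {z \<in> S. periodic_pt M n z} = {y})"

definition pretail_vertices :: "int ^ 'd ^ 'd \<Rightarrow> int \<Rightarrow> int ^ 'd \<Rightarrow> (int ^ 'd) set" where
  "pretail_vertices M n y = \<Union>{S. is_pretail M n y S}"

definition pretail_edges :: "int ^ 'd ^ 'd \<Rightarrow> int \<Rightarrow> int ^ 'd \<Rightarrow> ((int ^ 'd) \<times> (int ^ 'd)) set" where
  "pretail_edges M n y = {(z, Tmap M n z) | z. z \<in> pretail_vertices M n y \<and> z \<noteq> y}"

definition digraph_iso :: "'a set \<Rightarrow> ('a \<times> 'a) set \<Rightarrow> 'b set \<Rightarrow> ('b \<times> 'b) set \<Rightarrow> bool" where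
  "digraph_iso V1 E1 V2 E2 \<longleftrightarrow>
     (\<exists>f. bij_betw f V1 V2 \<and> (\<forall>a\<in>V1. \<forall>b\<in>V1. (a, b) \<in> E1 \<longleftrightarrow> (f a, f b) \<in> E2))"

definition rooted_tree :: "'a set \<Rightarrow> ('a \<times> 'a) set \<Rightarrow> 'a \<Rightarrow> bool" where
  "rooted_tree V E r \<longleftrightarrow>
     finite V \<and> r \<in> V \<and> E \<subseteq> V \<times> V \<and>
     (\<forall>u. (u, r) \<notin> E) \<and>
     (\<forall>v\<in>V - {r}. \<exists>!u. (u, v) \<in> E) \<and>
     (\<forall>v\<in>V. (r, v) \<in> E\<^sup>*)"

end

theory Submission imports Defs begin

locale pt = fixes M :: "int^'d^'d" and N :: int assumes Npos: "N > 0"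
begin
abbreviation T where "T \<equiv> Tmap M N"
abbreviation V :: "(int^'d) set" where "V \<equiv> Ltil N"
definition r :: "int^'d \<Rightarrow> int^'d" where "r x = (\<chi> i. x$i mod N)"
definition L :: "int^'d \<Rightarrow> int^'d" where "L x = M *v x"

lemma T_def': "T x = r (L x)" by (simp add: Tmap_def r_def L_def)
lemma r_in: "r x \<in> V" using Npos by (simp add: r_def Ltil_def)
lemma r_id: "x \<in> V \<Longrightarrow> r x = x" by (simp add: r_def Ltil_def vec_eq_iff)
lemma r_r: "r (r x) = r x" by (simp add: r_def vec_eq_iff)
lemma r_add: "r (r x + r y) = r (x + y)" by (simp add: r_def vec_eq_iff mod_add_eq)
lemma r_diff: "r (r x - r y) = r (x - y)" by (simp add: r_def vec_eq_iff mod_diff_eq)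
lemma r_0: "r 0 = 0" by (simp add: r_def vec_eq_iff)
lemma r_self: "r (a - a) = 0" by (simp add: r_0)
lemma L_cong: assumes "r x = r y" shows "r (L x) = r (L y)"
proof -
  have c: "x$j mod N = y$j mod N" for j using assms by (auto simp: r_def vec_eq_iff)
  have e: "(\<Sum>j\<in>UNIV. M$i$j * z$j) mod N = (\<Sum>j\<in>UNIV. M$i$j * (z$j mod N)) mod N" for z i
  proof -
    have "(\<Sum>j\<in>UNIV. M$i$j * z$j) mod N = (\<Sum>j\<in>UNIV. (M$i$j * z$j) mod N) mod N"
      by (rule mod_sum_eq[symmetric])
    also have "(\<Sum>j\<in>UNIV. (M$i$j * z$j) mod N) = (\<Sum>j\<in>UNIV. (M$i$j * (z$j mod N)) mod N)"
      by (simp add: mod_mult_right_eq)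
    also have "(\<Sum>j\<in>UNIV. (M$i$j * (z$j mod N)) mod N) mod N = (\<Sum>j\<in>UNIV. M$i$j * (z$j mod N)) mod N"
      by (rule mod_sum_eq)
    finally show ?thesis .
  qed
  show ?thesis unfolding vec_eq_iff r_def L_def matrix_vector_mult_def
  proof
    fix i
    have "(\<Sum>j\<in>UNIV. M$i$j * x$j) mod N = (\<Sum>j\<in>UNIV. M$i$j * y$j) mod N"
      using e[of i x] e[of i y] c by simp
    then show "(\<chi> i. (\<chi> i. \<Sum>j\<in>UNIV. M $ i $ j * x $ j) $ i mod N) $ i =
          (\<chi> i. (\<chi> i. \<Sum>j\<in>UNIV. M $ i $ j * y $ j) $ i mod N) $ i" by simp
  qed
qed
lemma L_add: "L (x + y) = L x + L y" by (simp add: L_def matrix_vector_right_distrib)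
lemma L_diff: "L (x - y) = L x - L y" by (simp add: L_def matrix_vector_mult_diff_distrib)
lemma Lp_add: "(L^^j) (x + y) = (L^^j) x + (L^^j) y" by (induction j) (auto simp: L_add)
lemma Lp_diff: "(L^^j) (x - y) = (L^^j) x - (L^^j) y" by (induction j) (auto simp: L_diff)
lemma Lp_cong: "r x = r y \<Longrightarrow> r ((L^^j) x) = r ((L^^j) y)"
proof (induction j)
  case (Suc j)
  have "r ((L^^j) x) = r ((L^^j) y)" by (rule Suc.IH[OF Suc.prems])
  then have "r (L ((L^^j) x)) = r (L ((L^^j) y))" by (rule L_cong)
  then show ?case by simp
qed simp
lemma Tp_r: "(T^^j) (r x) = r ((L^^j) x)"
proof (induction j)
  case (Suc j)
  have "(T^^Suc j) (r x) = T (r ((L^^j) x))" using Suc by simp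
  also have "\<dots> = r (L (r ((L^^j) x)))" by (simp add: T_def')
  also have "\<dots> = r (L ((L^^j) x))" by (rule L_cong) (simp add: r_r)
  finally show ?case by simp
qed simp
lemma Tp_V: "x \<in> V \<Longrightarrow> (T^^j) x = r ((L^^j) x)" using Tp_r[of j x] by (simp add: r_id)
lemma Tp_add: "a \<in> V \<Longrightarrow> b \<in> V \<Longrightarrow> (T^^j) (r (a + b)) = r ((T^^j) a + (T^^j) b)"
  by (simp add: Tp_r Tp_V r_add Lp_add)
lemma Tp_diff: "a \<in> V \<Longrightarrow> b \<in> V \<Longrightarrow> (T^^j) (r (a - b)) = r ((T^^j) a - (T^^j) b)"
  by (simp add: Tp_r Tp_V r_diff Lp_diff)
lemma T_in: "T x \<in> V" by (simp add: T_def' r_in)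
lemma Tp_in: "x \<in> V \<Longrightarrow> (T^^j) x \<in> V" by (induction j) (auto simp: T_in)
lemma T0: "T 0 = 0" by (simp add: T_def' L_def r_0)
lemma Tp0: "(T^^j) 0 = 0" by (induction j) (auto simp: T0)
lemma zero_in: "0 \<in> V" using Npos by (simp add: Ltil_def)
lemma r_diff_eq0: assumes "a \<in> V" "b \<in> V" shows "r (a - b) = 0 \<longleftrightarrow> a = b"
proof
  assume h: "r (a - b) = 0"
  show "a = b" unfolding vec_eq_iff
  proof
    fix i
    have "(a$i - b$i) mod N = 0" using h by (simp add: r_def vec_eq_iff)
    moreover have "0 \<le> a$i" "a$i < N" "0 \<le> b$i" "b$i < N" using assms by (auto simp: Ltil_def)
    have d: "N dvd a$i - b$i" using \<open>(a$i - b$i) mod N = 0\<close> by (simp add: mod_eq_0_iff_dvd)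
    have "a$i mod N = b$i mod N" using d by (simp only: mod_eq_dvd_iff)
    moreover have "a$i mod N = a$i" "b$i mod N = b$i" using \<open>0 \<le> a$i\<close> \<open>a$i < N\<close> \<open>0 \<le> b$i\<close> \<open>b$i < N\<close> by simp_all
    ultimately show "a$i = b$i" by simp
  qed
qed (simp add: r_0)
lemma fin_V: "finite V"
proof -
  have sub: "V \<subseteq> (\<lambda>f. \<chi> i. f i) ` (PiE UNIV (\<lambda>_. {0..<N}))"
  proof
    fix x assume "x \<in> V"
    hence "restrict (vec_nth x) UNIV \<in> PiE UNIV (\<lambda>_. {0..<N})" by (auto simp: Ltil_def)
    moreover have "x = (\<chi> i. restrict (vec_nth x) UNIV i)" by (simp add: vec_eq_iff)
    ultimately show "x \<in> (\<lambda>f. \<chi> i. f i) ` (PiE UNIV (\<lambda>_. {0..<N}))" by blast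
  qed
  have fin: "finite (PiE (UNIV::'d set) (\<lambda>_. {0..<N}))" by (rule finite_PiE) auto
  show ?thesis by (rule finite_subset[OF sub finite_imageI[OF fin]])
qed
lemma comm: "(T^^a) ((T^^b) x) = (T^^b) ((T^^a) x)"
proof -
  have "(T^^a) ((T^^b) x) = (T^^(a+b)) x" by (simp add: funpow_add)
  also have "\<dots> = (T^^(b+a)) x" by (simp add: add.commute)
  also have "\<dots> = (T^^b) ((T^^a) x)" by (simp add: funpow_add)
  finally show ?thesis .
qed

lemma m_ex: "\<exists>m\<ge>1. \<forall>x\<in>V. (T^^m) ((T^^m) x) = (T^^m) x"
proof -
  let ?F = "\<lambda>k. restrict (T^^k) V"
  have "?F ` UNIV \<subseteq> V \<rightarrow>\<^sub>E V" using Tp_in by auto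
  moreover have "finite (V \<rightarrow>\<^sub>E V)" by (rule finite_PiE) (simp_all add: fin_V)
  ultimately have "finite (?F ` UNIV)" by (rule finite_subset)
  hence "\<not> inj ?F" using finite_imageD infinite_UNIV_nat by blast
  then obtain a0 b0 where ab0: "a0 \<noteq> b0" "?F a0 = ?F b0" by (auto simp: inj_def)
  obtain a b where ab: "a < b" "\<forall>x\<in>V. (T^^a) x = (T^^b) x"
  proof (cases "a0 < b0")
    case True
    then show ?thesis using ab0 that[of a0 b0] by (metis restrict_apply')
  next
    case False
    then have "b0 < a0" using ab0 by simp
    then show ?thesis using ab0 that[of b0 a0] by (metis restrict_apply')
  qed
  define p where "p = b - a"
  have p1: "p \<ge> 1" using ab by (simp add: p_def)
  have step: "(T^^(q+p)) x = (T^^q) x" if "q \<ge> a" "x \<in> V" for q x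
  proof -
    have "q + p = (q - a) + b" using that ab by (simp add: p_def)
    then have "(T^^(q+p)) x = (T^^(q-a)) ((T^^b) x)" by (simp add: funpow_add)
    also have "\<dots> = (T^^(q-a)) ((T^^a) x)" using ab that by simp
    also have "\<dots> = (T^^((q-a)+a)) x" by (simp add: funpow_add)
    also have "\<dots> = (T^^q) x" using that by simp
    finally show ?thesis .
  qed
  have iter: "(T^^(q + p*t)) x = (T^^q) x" if "q \<ge> a" "x \<in> V" for q x t
  proof (induction t)
    case (Suc t)
    have "(T^^(q + p*Suc t)) x = (T^^((q + p*t) + p)) x" by (simp add: algebra_simps)
    also have "\<dots> = (T^^(q + p*t)) x" by (rule step) (use that in auto)
    finally show ?case using Suc by simp
  qed simp
  define m where "m = p*(a+1)"
  have "a \<le> p*a" using p1 by simp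
  moreover have "m = p*a + p" by (simp add: m_def algebra_simps)
  ultimately have m1: "m \<ge> a" "m \<ge> 1" using p1 by linarith+
  have "(T^^m) ((T^^m) x) = (T^^m) x" if "x \<in> V" for x
  proof -
    have "(T^^m) ((T^^m) x) = (T^^(m + p*(a+1))) x" by (simp add: funpow_add m_def)
    also have "\<dots> = (T^^m) x" by (rule iter) (use m1 that in auto)
    finally show ?thesis .
  qed
  then show ?thesis using m1 by blast
qed

definition m where "m = (SOME m. m \<ge> 1 \<and> (\<forall>x\<in>V. (T^^m) ((T^^m) x) = (T^^m) x))"
lemma m_props: "m \<ge> 1" "\<forall>x\<in>V. (T^^m) ((T^^m) x) = (T^^m) x"
  using someI_ex[OF m_ex] unfolding m_def by blast+
lemma m1: "m \<ge> 1" by (rule m_props)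
lemma idem: "x \<in> V \<Longrightarrow> (T^^m) ((T^^m) x) = (T^^m) x" using m_props by blast

lemma mt: "x \<in> V \<Longrightarrow> t \<ge> 1 \<Longrightarrow> (T^^(m*t)) x = (T^^m) x"
proof (induction t)
  case (Suc t)
  show ?case
  proof (cases "t = 0")
    case False
    have "(T^^(m*Suc t)) x = (T^^m) ((T^^(m*t)) x)" by (simp add: funpow_add)
    also have "\<dots> = (T^^m) ((T^^m) x)" using Suc False by simp
    finally show ?thesis using idem Suc by simp
  qed simp
qed simp

lemma fixmt: "(T^^m) p = p \<Longrightarrow> (T^^(m*t)) p = p"
proof (induction t)
  case (Suc t)
  have "(T^^(m*Suc t)) p = (T^^m) ((T^^(m*t)) p)" by (simp add: funpow_add)
  then show ?case using Suc by simp
qed simp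

lemma kt: "(T^^k) y = y \<Longrightarrow> (T^^(k*t)) y = y"
proof (induction t)
  case (Suc t)
  have "(T^^(k*Suc t)) y = (T^^k) ((T^^(k*t)) y)" by (simp add: funpow_add)
  then show ?case using Suc by simp
qed simp

lemma per_iff: "periodic_pt M N y \<longleftrightarrow> y \<in> V \<and> (T^^m) y = y"
proof
  assume "periodic_pt M N y"
  then obtain k where k: "y \<in> V" "k \<ge> 1" "(T^^k) y = y" by (auto simp: periodic_pt_def)
  have "(T^^(k*m)) y = y" by (rule kt[OF k(3)])
  moreover have "(T^^(m*k)) y = (T^^m) y" by (rule mt[OF k(1,2)])
  ultimately show "y \<in> V \<and> (T^^m) y = y" using k by (simp add: mult.commute)
next
  assume "y \<in> V \<and> (T^^m) y = y"
  then show "periodic_pt M N y" using m1 by (auto simp: periodic_pt_def)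
qed

lemma ker_m: assumes "k \<in> V" "(T^^j) k = 0" shows "(T^^m) k = 0"
proof (cases "j = 0")
  case True then show ?thesis using assms by (simp add: Tp0)
next
  case False
  have "j \<le> m*j" using m1 by simp
  hence "m*j = (m*j - j) + j" by simp
  hence "(T^^(m*j)) k = (T^^(m*j - j)) ((T^^j) k)" by (metis funpow_add o_apply)
  also have "\<dots> = 0" using assms by (simp add: Tp0)
  finally show ?thesis using mt[OF assms(1), of j] False by simp
qed

definition g where "g z = r (z - (T^^m) z)"
lemma g_in: "g z \<in> V" by (simp add: g_def r_in)
lemma Tp_g: "z \<in> V \<Longrightarrow> (T^^i) (g z) = r ((T^^i) z - (T^^m) ((T^^i) z))"
  unfolding g_def by (simp add: Tp_diff Tp_in comm)
lemma per_iter: assumes z: "z \<in> V" shows "(T^^m) ((T^^i) z) = (T^^i) z \<longleftrightarrow> (T^^i) (g z) = 0"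
proof -
  have "(T^^i) (g z) = r ((T^^i) z - (T^^m) ((T^^i) z))" by (rule Tp_g[OF z])
  moreover have "r ((T^^i) z - (T^^m) ((T^^i) z)) = 0 \<longleftrightarrow> (T^^i) z = (T^^m) ((T^^i) z)"
    by (rule r_diff_eq0) (simp_all add: Tp_in z)
  ultimately show ?thesis by auto
qed
lemma per_iter': "z \<in> V \<Longrightarrow> periodic_pt M N ((T^^i) z) \<longleftrightarrow> (T^^i) (g z) = 0"
  by (simp add: per_iff Tp_in per_iter)
lemma g_ker: assumes z: "z \<in> V" shows "(T^^m) (g z) = 0"
proof -
  have "(T^^m) (g z) = r ((T^^m) z - (T^^m) ((T^^m) z))" by (rule Tp_g[OF z])
  then show ?thesis using idem[OF z] by (simp add: r_0)
qed
lemma g_Tp: assumes "z \<in> V" shows "g ((T^^i) z) = (T^^i) (g z)"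
proof -
  have "g ((T^^i) z) = r ((T^^i) z - (T^^m) ((T^^i) z))" by (simp only: g_def)
  then show ?thesis using Tp_g[OF assms, of i] by simp
qed
lemma g_T: "z \<in> V \<Longrightarrow> g (T z) = T (g z)"
  using g_Tp[of z 1] by simp
lemma g_per: "(T^^m) y = y \<Longrightarrow> g y = 0" by (simp add: g_def r_self r_0)
lemma decomp: "z \<in> V \<Longrightarrow> r (g z + (T^^m) z) = z"
proof -
  assume z: "z \<in> V"
  have "r (g z + (T^^m) z) = r (r (z - (T^^m) z) + r ((T^^m) z))"
    using z by (simp add: g_def r_id Tp_in)
  also have "\<dots> = z" using z by (simp add: r_add r_id)
  finally show ?thesis .
qed
lemma compose:
  assumes "k \<in> V" "p \<in> V" "(T^^m) k = 0" "(T^^m) p = p"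
  shows "(T^^m) (r (k + p)) = p" "g (r (k + p)) = k"
proof -
  show 1: "(T^^m) (r (k + p)) = p" using assms by (simp add: Tp_add r_id)
  have "g (r (k + p)) = r (r (k + p) - p)" by (simp add: g_def 1)
  also have "\<dots> = r (r (k + p) - r p)" using r_id[OF assms(2)] by simp
  also have "\<dots> = r (k + p - p)" by (rule r_diff)
  also have "\<dots> = k" using r_id[OF assms(1)] by simp
  finally show "g (r (k + p)) = k" .
qed

definition h where "h k = (LEAST j. (T^^j) k = 0)"
lemma h_I: "(T^^j) k = 0 \<Longrightarrow> (T^^(h k)) k = 0" unfolding h_def by (rule LeastI)
lemma h_le: "(T^^j) k = 0 \<Longrightarrow> h k \<le> j" unfolding h_def by (rule Least_le)


lemma fp: "(T^^a) ((T^^b) x) = (T^^(a+b)) x" by (simp add: funpow_add)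

lemma pv_mem: "z \<in> pretail_vertices M N y \<longleftrightarrow>
  (\<exists>x j. x \<in> V \<and> (T^^j) x = y \<and> {w \<in> {(T^^i) x | i. i \<le> j}. periodic_pt M N w} = {y} \<and> (\<exists>i\<le>j. z = (T^^i) x))"
  unfolding pretail_vertices_def is_pretail_def by blast

lemma vert_char: assumes y: "periodic_pt M N y"
  shows "z \<in> pretail_vertices M N y \<longleftrightarrow> z \<in> V \<and> (T^^(h (g z))) z = y"
proof
  assume "z \<in> pretail_vertices M N y"
  then obtain x j i where x: "x \<in> V" "(T^^j) x = y"
    and S: "{w \<in> {(T^^i) x | i. i \<le> j}. periodic_pt M N w} = {y}"
    and i: "i \<le> j" "z = (T^^i) x" unfolding pv_mem by blast
  have onlyy: "(T^^l) x = y" if "l \<le> j" "periodic_pt M N ((T^^l) x)" for l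
    using S that by blast
  have zV: "z \<in> V" using Tp_in x i by simp
  have gz: "g z = (T^^i) (g x)" using g_Tp x i by simp
  have "(T^^j) (g x) = 0" using per_iter'[OF x(1), of j] x(2) y by simp
  moreover have "j - i + i = j" using i by simp
  ultimately have "(T^^(j-i)) (g z) = 0" by (simp add: gz fp)
  hence hle: "h (g z) \<le> j - i" and hI: "(T^^(h (g z))) (g z) = 0" by (auto intro: h_le h_I)
  have "(T^^(h (g z) + i)) (g x) = 0" using hI by (simp add: gz fp)
  hence "periodic_pt M N ((T^^(h (g z) + i)) x)" using per_iter'[OF x(1)] by simp
  hence "(T^^(h (g z) + i)) x = y" using onlyy hle i by simp
  thus "z \<in> V \<and> (T^^(h (g z))) z = y" using i zV by (simp add: fp)
next
  assume z: "z \<in> V \<and> (T^^(h (g z))) z = y"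
  have set: "{w \<in> {(T^^i) z | i. i \<le> h (g z)}. periodic_pt M N w} = {y}"
  proof
    show "{w \<in> {(T^^i) z | i. i \<le> h (g z)}. periodic_pt M N w} \<subseteq> {y}"
    proof
      fix w assume "w \<in> {w \<in> {(T^^i) z | i. i \<le> h (g z)}. periodic_pt M N w}"
      then obtain i where i: "i \<le> h (g z)" "w = (T^^i) z" "periodic_pt M N w" by blast
      then have "(T^^i) (g z) = 0" using per_iter' z by simp
      then have "h (g z) \<le> i" by (rule h_le)
      then show "w \<in> {y}" using i z by simp
    qed
    show "{y} \<subseteq> {w \<in> {(T^^i) z | i. i \<le> h (g z)}. periodic_pt M N w}" using z y by auto
  qed
  show "z \<in> pretail_vertices M N y" unfolding pv_mem
    apply (rule exI[of _ z], rule exI[of _ "h (g z)"])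
    using z set by force
qed

lemma per0: "periodic_pt M N 0" by (simp add: per_iff zero_in Tp0)

lemma vert0: "z \<in> pretail_vertices M N 0 \<longleftrightarrow> z \<in> V \<and> (T^^m) z = 0"
proof
  assume "z \<in> pretail_vertices M N 0"
  then show "z \<in> V \<and> (T^^m) z = 0" using vert_char[OF per0] ker_m by blast
next
  assume z: "z \<in> V \<and> (T^^m) z = 0"
  then have "g z = z" by (simp add: g_def r_id)
  moreover have "(T^^(h z)) z = 0" using z by (auto intro: h_I)
  ultimately show "z \<in> pretail_vertices M N 0" using vert_char[OF per0] z by simp
qed

lemma edges: "(a, b) \<in> pretail_edges M N y \<longleftrightarrow> a \<in> pretail_vertices M N y \<and> a \<noteq> y \<and> b = T a"
  by (auto simp: pretail_edges_def)


lemma TS: "(T^^n) (T x) = (T^^Suc n) x" using funpow_swap1[of T n x] by simp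

lemma h0: "h 0 = 0" using h_le[of 0 0] by simp

lemma vy_T: assumes y: "periodic_pt M N y" and a: "a \<in> pretail_vertices M N y" "a \<noteq> y"
  shows "T a \<in> pretail_vertices M N y"
proof -
  have aV: "a \<in> V" and ay: "(T^^(h (g a))) a = y" using a vert_char[OF y] by auto
  have "h (g a) \<noteq> 0"
  proof
    assume "h (g a) = 0"
    then have "a = y" using ay by simp
    then show False using a(2) by simp
  qed
  then obtain n where n: "h (g a) = Suc n" by (cases "h (g a)") auto
  have gk: "(T^^Suc n) (g a) = 0" using h_I[of "Suc n" "g a"] n g_ker[OF aV] h_I by (metis)
  hence "(T^^n) (T (g a)) = 0" by (simp add: TS)
  hence le1: "h (T (g a)) \<le> n" by (rule h_le)
  have "(T^^(h (T (g a)))) (T (g a)) = 0" using h_I \<open>(T^^n) (T (g a)) = 0\<close> by blast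
  hence "(T^^Suc (h (T (g a)))) (g a) = 0" by (simp add: TS)
  hence "Suc n \<le> Suc (h (T (g a)))" using n h_le by metis
  hence hT: "h (g (T a)) = n" using le1 g_T[OF aV] by simp
  have "(T^^n) (T a) = y" using ay n by (simp add: TS)
  then show ?thesis using vert_char[OF y] hT T_in by simp
qed

lemma g_inj: assumes y: "periodic_pt M N y" shows "inj_on g (pretail_vertices M N y)"
proof
  fix z1 z2 assume z1: "z1 \<in> pretail_vertices M N y" and z2: "z2 \<in> pretail_vertices M N y"
    and eq: "g z1 = g z2"
  have yV: "y \<in> V" "(T^^m) y = y" using y per_iff by auto
  have p: "(T^^m) z = (T^^((m-1) * h (g z))) y" if z: "z \<in> pretail_vertices M N y" for z
  proof -
    have zV: "z \<in> V" and zy: "(T^^(h (g z))) z = y" using z vert_char[OF y] by auto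
    define p where "p = (T^^m) z"
    let ?h = "h (g z)"
    have fix1: "(T^^m) p = p" using idem zV p_def by simp
    have "(T^^?h) p = (T^^m) ((T^^?h) z)" unfolding p_def by (rule comm)
    also have "\<dots> = y" using zy yV by simp
    finally have hp: "(T^^?h) p = y" .
    have mh: "m * ?h = (m-1) * ?h + ?h" using m1 by (simp add: algebra_simps)
    have "p = (T^^(m*?h)) p" using fixmt[OF fix1] by simp
    also have "\<dots> = (T^^((m-1)*?h + ?h)) p" using mh by simp
    also have "\<dots> = (T^^((m-1)*?h)) ((T^^?h) p)" by (simp only: fp)
    finally show ?thesis using hp p_def by simp
  qed
  have "z1 = r (g z1 + (T^^m) z1)" using decomp z1 vert_char[OF y] by simp
  also have "\<dots> = r (g z2 + (T^^m) z2)" using eq p[OF z1] p[OF z2] by simp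
  also have "\<dots> = z2" using decomp z2 vert_char[OF y] by simp
  finally show "z1 = z2" .
qed

lemma g_img: assumes y: "periodic_pt M N y" shows "g ` pretail_vertices M N y = pretail_vertices M N 0"
proof
  show "g ` pretail_vertices M N y \<subseteq> pretail_vertices M N 0"
    using vert_char[OF y] vert0 g_in g_ker by auto
next
  show "pretail_vertices M N 0 \<subseteq> g ` pretail_vertices M N y"
  proof
    fix k assume "k \<in> pretail_vertices M N 0"
    hence k: "k \<in> V" "(T^^m) k = 0" using vert0 by auto
    have yV: "y \<in> V" "(T^^m) y = y" using y per_iff by auto
    define hh where "hh = h k"
    have hk: "(T^^hh) k = 0" unfolding hh_def using k h_I by blast
    define p where "p = (T^^((m-1)*hh)) y"
    have pV: "p \<in> V" using yV Tp_in p_def by simp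
    have pm: "(T^^m) p = p" unfolding p_def using comm yV by metis
    define z where "z = r (k + p)"
    have gz: "g z = k" and mz: "(T^^m) z = p" using compose[OF k(1) pV k(2) pm] z_def by auto
    have "(T^^hh) z = r ((T^^hh) k + (T^^hh) p)" using Tp_add[OF k(1) pV] z_def by simp
    also have "(T^^hh) p = (T^^(hh + (m-1)*hh)) y" by (simp add: p_def fp)
    also have "hh + (m-1)*hh = m*hh" using m1 by (simp add: algebra_simps)
    also have "(T^^(m*hh)) y = y" using fixmt yV by simp
    finally have "(T^^hh) z = y" using hk yV r_id by simp
    hence "z \<in> pretail_vertices M N y" using vert_char[OF y] gz hh_def z_def r_in by simp
    then show "k \<in> g ` pretail_vertices M N y" using gz by blast
  qed
qed

lemma iso: assumes y: "periodic_pt M N y"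
  shows "digraph_iso (pretail_vertices M N y) (pretail_edges M N y)
                     (pretail_vertices M N 0) (pretail_edges M N 0)"
  unfolding digraph_iso_def
proof (intro exI conjI ballI)
  show "bij_betw g (pretail_vertices M N y) (pretail_vertices M N 0)"
    using g_inj[OF y] g_img[OF y] by (simp add: bij_betw_def)
next
  fix a b assume a: "a \<in> pretail_vertices M N y" and b: "b \<in> pretail_vertices M N y"
  have aV: "a \<in> V" using a vert_char[OF y] by simp
  have ga: "g a \<in> pretail_vertices M N 0" using a g_img[OF y] by blast
  have g0: "g a = 0 \<longleftrightarrow> a = y"
  proof
    assume "g a = 0"
    then show "a = y" using a vert_char[OF y] h0 by simp
  next
    assume "a = y" then show "g a = 0" using y per_iff g_per by simp
  qed
  show "(a, b) \<in> pretail_edges M N y \<longleftrightarrow> (g a, g b) \<in> pretail_edges M N 0"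
  proof
    assume "(a, b) \<in> pretail_edges M N y"
    then have "a \<noteq> y" "b = T a" using edges by auto
    then show "(g a, g b) \<in> pretail_edges M N 0" using edges ga g0 g_T[OF aV] by simp
  next
    assume "(g a, g b) \<in> pretail_edges M N 0"
    then have ay: "a \<noteq> y" and "g b = T (g a)" using edges g0 by auto
    then have "g b = g (T a)" using g_T[OF aV] by simp
    moreover have "T a \<in> pretail_vertices M N y" using vy_T[OF y a ay] .
    ultimately have "b = T a" using g_inj[OF y] b by (meson inj_onD)
    then show "(a, b) \<in> pretail_edges M N y" using edges a ay by simp
  qed
qed


lemma V0_T: "z \<in> pretail_vertices M N 0 \<Longrightarrow> T z \<in> pretail_vertices M N 0"
proof -
  assume "z \<in> pretail_vertices M N 0"
  hence z: "z \<in> V" "(T^^m) z = 0" using vert0 by auto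
  have "(T^^m) (T z) = T ((T^^m) z)" using funpow_swap1[of T m z] by simp
  then show ?thesis using z vert0 T_in T0 by simp
qed

lemma reach: "z \<in> pretail_vertices M N 0 \<Longrightarrow> (T^^j) z = 0 \<Longrightarrow> (z, 0) \<in> (pretail_edges M N 0)\<^sup>*"
proof (induction j arbitrary: z)
  case 0 then show ?case by simp
next
  case (Suc j)
  show ?case
  proof (cases "z = 0")
    case False
    have "(z, T z) \<in> pretail_edges M N 0" using Suc.prems False edges by simp
    moreover have "(T z, 0) \<in> (pretail_edges M N 0)\<^sup>*"
      using Suc.IH[of "T z"] V0_T[OF Suc.prems(1)] Suc.prems(2) by (simp add: TS)
    ultimately show ?thesis by (rule converse_rtrancl_into_rtrancl)
  qed simp
qed

lemma tree: "rooted_tree (pretail_vertices M N 0) ((pretail_edges M N 0)\<inverse>) 0"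
  unfolding rooted_tree_def
proof (intro conjI ballI allI)
  show "finite (pretail_vertices M N 0)"
  proof (rule finite_subset[OF _ fin_V])
    show "pretail_vertices M N 0 \<subseteq> V" using vert0 by blast
  qed
  show "0 \<in> pretail_vertices M N 0" using vert0 zero_in Tp0 by simp
  show "(pretail_edges M N 0)\<inverse> \<subseteq> pretail_vertices M N 0 \<times> pretail_vertices M N 0"
  proof
    fix e assume "e \<in> (pretail_edges M N 0)\<inverse>"
    then obtain u v where e: "e = (u, v)" "(v, u) \<in> pretail_edges M N 0" by auto
    then have "v \<in> pretail_vertices M N 0" "u = T v" using edges by blast+
    then show "e \<in> pretail_vertices M N 0 \<times> pretail_vertices M N 0" using e V0_T by simp
  qed
  show "(u, 0) \<notin> (pretail_edges M N 0)\<inverse>" for u using edges by simp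
  show "\<exists>!u. (u, v) \<in> (pretail_edges M N 0)\<inverse>" if "v \<in> pretail_vertices M N 0 - {0}" for v
  proof (rule ex1I[of _ "T v"])
    show "(T v, v) \<in> (pretail_edges M N 0)\<inverse>" using that edges by simp
    show "u = T v" if "(u, v) \<in> (pretail_edges M N 0)\<inverse>" for u using that edges by simp
  qed
  show "(0, v) \<in> ((pretail_edges M N 0)\<inverse>)\<^sup>*" if v: "v \<in> pretail_vertices M N 0" for v
  proof -
    have "(T^^m) v = 0" using v vert0 by simp
    then have "(v, 0) \<in> (pretail_edges M N 0)\<^sup>*" using reach v by blast
    then show ?thesis by (simp add: rtrancl_converse)
  qed
qed

lemma triv: "pretail_vertices M N 0 = {0} \<longleftrightarrow> bij_betw T V V"
proof
  assume K: "pretail_vertices M N 0 = {0}"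
  have inj: "inj_on T V"
  proof
    fix a b assume ab: "a \<in> V" "b \<in> V" "T a = T b"
    define d where "d = r (a - b)"
    have dV: "d \<in> V" by (simp add: d_def r_in)
    have "T d = r (T a - T b)" using Tp_diff[OF ab(1,2), of 1] d_def by simp
    hence Td: "T d = 0" using ab(3) by (simp add: r_0)
    have ms: "Suc (m - 1) = m" using m1 by simp
    have "(T^^(m-1)) (T d) = (T^^Suc (m-1)) d" by (rule TS)
    then have "(T^^m) d = (T^^(m-1)) (T d)" by (simp only: ms)
    hence "(T^^m) d = 0" using Td Tp0 by simp
    hence "d \<in> pretail_vertices M N 0" using vert0 dV by simp
    hence "d = 0" using K by simp
    then show "a = b" using r_diff_eq0[OF ab(1,2)] d_def by simp
  qed
  have "T ` V = V" by (rule endo_inj_surj[OF fin_V _ inj]) (auto simp: T_in)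
  then show "bij_betw T V V" using inj by (simp add: bij_betw_def)
next
  assume B: "bij_betw T V V"
  have inj: "inj_on T V" using B by (simp add: bij_betw_def)
  have z: "(T^^j) k = 0 \<Longrightarrow> k \<in> V \<Longrightarrow> k = 0" for j k
  proof (induction j arbitrary: k)
    case (Suc j)
    have "(T^^j) (T k) = 0" using Suc.prems by (simp add: TS)
    then have "T k = 0" using Suc.IH T_in by blast
    then have "T k = T 0" by (simp add: T0)
    then show ?case by (rule inj_onD[OF inj _ Suc.prems(2) zero_in])
  qed simp
  show "pretail_vertices M N 0 = {0}"
  proof
    show "pretail_vertices M N 0 \<subseteq> {0}"
    proof
      fix k assume "k \<in> pretail_vertices M N 0"
      then have "k \<in> V" "(T^^m) k = 0" using vert0 by blast+
      then show "k \<in> {0}" using z by blast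
    qed
    show "{0} \<subseteq> pretail_vertices M N 0" using vert0 zero_in Tp0 by simp
  qed
qed

end

theorem corollary3p3:
  fixes M :: "int ^ 'd ^ 'd" and n :: nat
  assumes "n \<ge> 1"
  shows "(\<forall>y. periodic_pt M (int n) y \<longrightarrow>
            digraph_iso (pretail_vertices M (int n) y) (pretail_edges M (int n) y)
                        (pretail_vertices M (int n) 0) (pretail_edges M (int n) 0))
       \<and> rooted_tree (pretail_vertices M (int n) 0) ((pretail_edges M (int n) 0)\<inverse>) 0
       \<and> (pretail_vertices M (int n) 0 = {0} \<longleftrightarrow> bij_betw (Tmap M (int n)) (Ltil (int n)) (Ltil (int n)))"
proof -
  interpret pt M "int n" using assms by unfold_locales simp
  show ?thesis
  proof (intro conjI allI impI)
    show "digraph_iso (pretail_vertices M (int n) y) (pretail_edges M (int n) y)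
                        (pretail_vertices M (int n) 0) (pretail_edges M (int n) 0)"
      if "periodic_pt M (int n) y" for y using that by (rule iso)
  qed (rule tree, rule triv)
qed

end
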